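(* Let $P$ be a finite nonempty poset with $p$ elements, and let $\epsilon$ and $\mu$ be the labelings of the covering relations $E(P)$ induced by two bijections $\omega,\lambda:P\to\{1,\dots,p\}$. Suppose that $P$ is both $\epsilon$-graded and $\mu$-graded. Then, as polynomials in $t$, $$\Omega\Big(P,\epsilon;t-\frac{r(\epsilon)}{2}\Big)=\Omega\Big(P,\mu;t-\frac{r(\mu)}{2}\Big).$$
   Context: A labeling of a finite poset $P$ with $p$ elements is a bijection $\omega:P\to\{1,\dots,p\}$. Write $x\prec y$ if $y$ covers $x$ and $E(P)=\{(x,y):x\prec y\}$. The labeling $\omega$ induces $\epsilon:E(P)\to\{-1,1\}$, $\epsilon(x,y)=1$ if $\omega(x)<\omega(y)$ and $\epsilon(x,y)=-1$ if $\omega(x)>\omega(y)$. A $(P,\epsilon)$-partition is a map $\sigma:P\to\{1,2,3,\dots\}$ with $\sigma(x)\ge\sigma(y)$ whenever $x\le y$, and $\sigma(x)>\sigma(y)$ whenever $x<y$ and $\omega(x)>\omega(y)$ (equivalently, whenever $x\prec y$ and $\epsilon(x,y)=-1$; so this depends only on $\epsilon$). The order polynomial $\Omega(P,\epsilon;n)$ is the number of $(P,\epsilon)$-partitions with largest part at most $n$; it is a polynomial in $n$ of degree $p$. $P$ is $\epsilon$-graded if the sum $\sum_{i=1}^n\epsilon(x_{i-1},x_i)$ takes the same value for every maximal chain $x_0\prec x_1\prec\cdots\prec x_n$ of $P$; this common value is the rank $r(\epsilon)$. *)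

theory Defs
  imports "HOL-Library.FuncSet" "HOL-Computational_Algebra.Polynomial"
begin

text \<open>A finite poset is a finite set P of elements of an ordered type, with the
induced order. Labelings are bijections P -> {1..card P}.\<close>

definition covers :: "'a::order set \<Rightarrow> 'a \<Rightarrow> 'a \<Rightarrow> bool" where
  "covers P x y \<longleftrightarrow> x \<in> P \<and> y \<in> P \<and> x < y \<and> \<not> (\<exists>z\<in>P. x < z \<and> z < y)"

definition is_labeling :: "'a set \<Rightarrow> ('a \<Rightarrow> nat) \<Rightarrow> bool" where
  "is_labeling P \<omega> \<longleftrightarrow> bij_betw \<omega> P {1..card P}"

definition eps :: "('a \<Rightarrow> nat) \<Rightarrow> 'a \<Rightarrow> 'a \<Rightarrow> int" where
  "eps \<omega> x y = (if \<omega> x < \<omega> y then 1 else -1)"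

definition maximal_chain :: "'a::order set \<Rightarrow> 'a list \<Rightarrow> bool" where
  "maximal_chain P xs \<longleftrightarrow> xs \<noteq> [] \<and>
     (\<forall>i. Suc i < length xs \<longrightarrow> covers P (xs ! i) (xs ! Suc i)) \<and>
     hd xs \<in> P \<and> last xs \<in> P \<and>
     \<not> (\<exists>z\<in>P. z < hd xs) \<and> \<not> (\<exists>z\<in>P. last xs < z)"

definition chain_eps_sum :: "('a \<Rightarrow> nat) \<Rightarrow> 'a list \<Rightarrow> int" where
  "chain_eps_sum \<omega> xs = (\<Sum>i<length xs - 1. eps \<omega> (xs ! i) (xs ! Suc i))"

definition eps_graded :: "'a::order set \<Rightarrow> ('a \<Rightarrow> nat) \<Rightarrow> bool" where
  "eps_graded P \<omega> \<longleftrightarrow> (\<exists>r. \<forall>xs. maximal_chain P xs \<longrightarrow> chain_eps_sum \<omega> xs = r)"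

definition eps_rank :: "'a::order set \<Rightarrow> ('a \<Rightarrow> nat) \<Rightarrow> int" where
  "eps_rank P \<omega> = (THE r. \<forall>xs. maximal_chain P xs \<longrightarrow> chain_eps_sum \<omega> xs = r)"

text \<open>(P,eps)-partitions with largest part at most n (functions are taken extensional
on P, i.e. undefined outside P).\<close>
definition P_partitions :: "'a::order set \<Rightarrow> ('a \<Rightarrow> nat) \<Rightarrow> nat \<Rightarrow> ('a \<Rightarrow> nat) set" where
  "P_partitions P \<omega> n = {\<sigma> \<in> P \<rightarrow>\<^sub>E {1..n}.
      (\<forall>x\<in>P. \<forall>y\<in>P. x \<le> y \<longrightarrow> \<sigma> x \<ge> \<sigma> y) \<and>
      (\<forall>x\<in>P. \<forall>y\<in>P. x < y \<and> \<omega> x > \<omega> y \<longrightarrow> \<sigma> x > \<sigma> y)}"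

definition order_poly :: "'a::order set \<Rightarrow> ('a \<Rightarrow> nat) \<Rightarrow> real poly" where
  "order_poly P \<omega> = (THE q. \<forall>n\<ge>1. poly q (real n) = real (card (P_partitions P \<omega> n)))"

end

theory Submission
  imports Defs
begin

definition rk :: "nat set \<Rightarrow> nat \<Rightarrow> nat" where
  "rk S s = card {t\<in>S. t \<le> s}"

lemma rk_less:
  assumes "finite S" "s \<in> S" "s' \<in> S" "s < s'"
  shows "rk S s < rk S s'"
  unfolding rk_def
proof (rule psubset_card_mono)
  show "finite {t \<in> S. t \<le> s'}" using assms by auto
  have "s' \<in> {t \<in> S. t \<le> s'}" "s' \<notin> {t \<in> S. t \<le> s}" using assms by auto
  moreover have "{t \<in> S. t \<le> s} \<subseteq> {t \<in> S. t \<le> s'}" using assms by auto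
  ultimately show "{t \<in> S. t \<le> s} \<subset> {t \<in> S. t \<le> s'}" by blast
qed

lemma rk_le_iff:
  assumes "finite S" "s \<in> S" "s' \<in> S"
  shows "rk S s \<le> rk S s' \<longleftrightarrow> s \<le> s'"
  using rk_less[OF assms(1,2,3)] rk_less[OF assms(1,3,2)]
  by (metis linorder_not_le nat_less_le)

lemma rk_less_iff:
  assumes "finite S" "s \<in> S" "s' \<in> S"
  shows "rk S s < rk S s' \<longleftrightarrow> s < s'"
  using rk_le_iff[OF assms(1,3,2)] by (simp add: not_le[symmetric])

lemma rk_bij:
  assumes "finite S"
  shows "bij_betw (rk S) S {1..card S}"
proof -
  have inj: "inj_on (rk S) S"
    by (intro inj_onI) (metis assms rk_le_iff order_antisym order_refl)
  have sub: "rk S ` S \<subseteq> {1..card S}"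
  proof
    fix y assume "y \<in> rk S ` S"
    then obtain s where s: "s \<in> S" "y = rk S s" by auto
    have "{t \<in> S. t \<le> s} \<noteq> {}" using s by auto
    moreover have "finite {t \<in> S. t \<le> s}" using assms by auto
    ultimately have "1 \<le> rk S s" unfolding rk_def
      by (simp add: Suc_leI card_gt_0_iff)
    moreover have "rk S s \<le> card S" unfolding rk_def
      using assms by (intro card_mono) auto
    ultimately show "y \<in> {1..card S}" using s by auto
  qed
  have "card (rk S ` S) = card S" using card_image[OF inj] .
  then have "rk S ` S = {1..card S}"
    using sub by (intro card_subset_eq) auto
  then show ?thesis using inj by (simp add: bij_betw_def)
qed

definition esurj :: "'a::order set \<Rightarrow> ('a \<Rightarrow> nat) \<Rightarrow> nat \<Rightarrow> nat" where
  "esurj P \<omega> k = card {\<tau> \<in> P_partitions P \<omega> k. \<tau> ` P = {1..k}}"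

lemma PP_finite: "finite P \<Longrightarrow> finite (P_partitions P \<omega> n)"
  unfolding P_partitions_def
  by (rule finite_subset[OF _ finite_PiE[of P "\<lambda>_. {1..n}"]]) auto

lemma count_image:
  assumes fin: "finite P" and S: "S \<subseteq> {1..n}"
  shows "card {\<sigma> \<in> P_partitions P \<omega> n. \<sigma> ` P = S} = esurj P \<omega> (card S)"
proof -
  have fS: "finite S" using S finite_subset by blast
  define k where "k = card S"
  define g where "g = the_inv_into S (rk S)"
  have bij: "bij_betw (rk S) S {1..k}" using rk_bij[OF fS] k_def by simp
  have gbij: "bij_betw g {1..k} S" unfolding g_def using bij_betw_the_inv_into[OF bij] .
  have rkg: "rk S (g i) = i" if "i \<in> {1..k}" for i
    unfolding g_def using bij that f_the_inv_into_f_bij_betw by metis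
  have grk: "g (rk S s) = s" if "s \<in> S" for s
    unfolding g_def using bij that the_inv_into_f_f bij_betw_def by metis
  have gS: "g i \<in> S" if "i \<in> {1..k}" for i using gbij that bij_betwE by blast
  have rkS: "rk S s \<in> {1..k}" if "s \<in> S" for s using bij that bij_betwE by blast
  define F where "F = (\<lambda>\<sigma>::'a\<Rightarrow>nat. restrict (\<lambda>x. rk S (\<sigma> x)) P)"
  define G where "G = (\<lambda>\<tau>::'a\<Rightarrow>nat. restrict (\<lambda>x. g (\<tau> x)) P)"
  have "bij_betw F {\<sigma> \<in> P_partitions P \<omega> n. \<sigma> ` P = S} {\<tau> \<in> P_partitions P \<omega> k. \<tau> ` P = {1..k}}"
  proof (rule bij_betw_byWitness[where f'=G])
    show "\<forall>a\<in>{\<sigma> \<in> P_partitions P \<omega> n. \<sigma> ` P = S}. G (F a) = a"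
    proof
      fix \<sigma> assume a: "\<sigma> \<in> {\<sigma> \<in> P_partitions P \<omega> n. \<sigma> ` P = S}"
      then have ext: "\<sigma> \<in> extensional P" unfolding P_partitions_def by (auto simp: PiE_def)
      show "G (F \<sigma>) = \<sigma>"
      proof
        fix x show "G (F \<sigma>) x = \<sigma> x"
          using a ext grk unfolding F_def G_def by (auto simp: extensional_def)
      qed
    qed
    show "\<forall>a\<in>{\<tau> \<in> P_partitions P \<omega> k. \<tau> ` P = {1..k}}. F (G a) = a"
    proof
      fix \<sigma> assume a: "\<sigma> \<in> {\<tau> \<in> P_partitions P \<omega> k. \<tau> ` P = {1..k}}"
      then have ext: "\<sigma> \<in> extensional P" unfolding P_partitions_def by (auto simp: PiE_def)
      have ink: "\<forall>x\<in>P. \<sigma> x \<in> {1..k}" using a by auto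
      show "F (G \<sigma>) = \<sigma>"
      proof
        fix x show "F (G \<sigma>) x = \<sigma> x"
          using a ext rkg ink unfolding F_def G_def by (auto simp: extensional_def)
      qed
    qed
    show "F ` {\<sigma> \<in> P_partitions P \<omega> n. \<sigma> ` P = S} \<subseteq> {\<tau> \<in> P_partitions P \<omega> k. \<tau> ` P = {1..k}}"
    proof
      fix \<tau> assume "\<tau> \<in> F ` {\<sigma> \<in> P_partitions P \<omega> n. \<sigma> ` P = S}"
      then obtain \<sigma> where s: "\<sigma> \<in> P_partitions P \<omega> n" "\<sigma> ` P = S" and t: "\<tau> = F \<sigma>" by auto
      have inS: "\<sigma> x \<in> S" if "x \<in> P" for x using s that by auto
      have rkin: "rk S (\<sigma> x) \<in> {1..k}" if "x \<in> P" for x using rkS inS that by blast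
      have "\<tau> \<in> P_partitions P \<omega> k"
        using s(1) rkin unfolding t F_def P_partitions_def
        by (auto simp: rkS inS rk_le_iff[OF fS] rk_less_iff[OF fS])
      moreover have "\<tau> ` P = {1..k}"
      proof -
        have "\<tau> ` P = rk S ` \<sigma> ` P" unfolding t F_def by (auto simp: image_image)
        also have "\<dots> = {1..k}" using s(2) bij by (simp add: bij_betw_def)
        finally show ?thesis .
      qed
      ultimately show "\<tau> \<in> {\<tau> \<in> P_partitions P \<omega> k. \<tau> ` P = {1..k}}" by simp
    qed
    show "G ` {\<tau> \<in> P_partitions P \<omega> k. \<tau> ` P = {1..k}} \<subseteq> {\<sigma> \<in> P_partitions P \<omega> n. \<sigma> ` P = S}"
    proof
      fix \<sigma> assume "\<sigma> \<in> G ` {\<tau> \<in> P_partitions P \<omega> k. \<tau> ` P = {1..k}}"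
      then obtain \<tau> where s: "\<tau> \<in> P_partitions P \<omega> k" "\<tau> ` P = {1..k}" and t: "\<sigma> = G \<tau>" by auto
      have ink: "\<tau> x \<in> {1..k}" if "x \<in> P" for x using s that by auto
      have le: "g (\<tau> y) \<le> g (\<tau> x) \<longleftrightarrow> \<tau> y \<le> \<tau> x" if "x \<in> P" "y \<in> P" for x y
        using rk_le_iff[OF fS gS[OF ink[OF that(2)]] gS[OF ink[OF that(1)]]] rkg ink that by simp
      have lt: "g (\<tau> y) < g (\<tau> x) \<longleftrightarrow> \<tau> y < \<tau> x" if "x \<in> P" "y \<in> P" for x y
        using rk_less_iff[OF fS gS[OF ink[OF that(2)]] gS[OF ink[OF that(1)]]] rkg ink that by simp
      have "\<sigma> \<in> P_partitions P \<omega> n"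
        using s(1) S gS ink unfolding t G_def P_partitions_def
        by (auto simp: le lt)
      moreover have "\<sigma> ` P = S"
      proof -
        have "\<sigma> ` P = g ` \<tau> ` P" unfolding t G_def by (auto simp: image_image)
        also have "\<dots> = S" using s(2) gbij by (simp add: bij_betw_def)
        finally show ?thesis .
      qed
      ultimately show "\<sigma> \<in> {\<sigma> \<in> P_partitions P \<omega> n. \<sigma> ` P = S}" by simp
    qed
  qed
  then show ?thesis unfolding esurj_def k_def by (rule bij_betw_same_card)
qed

lemma esurj_zero:
  assumes "finite P" "card P < k"
  shows "esurj P \<omega> k = 0"
proof -
  have e: "{\<tau> \<in> P_partitions P \<omega> k. \<tau> ` P = {1..k}} = {}"
  proof (rule ccontr)
    assume "{\<tau> \<in> P_partitions P \<omega> k. \<tau> ` P = {1..k}} \<noteq> {}"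
    then obtain \<tau> where "\<tau> ` P = {1..k}" by auto
    then have "card {1..k} \<le> card P" using card_image_le[OF assms(1), of \<tau>] by simp
    then show False using assms by simp
  qed
  show ?thesis unfolding esurj_def by (simp only: e card.empty)
qed

lemma card_PP_sum:
  assumes fin: "finite P"
  shows "card (P_partitions P \<omega> n) = (\<Sum>k\<le>card P. esurj P \<omega> k * (n choose k))"
proof -
  let ?A = "P_partitions P \<omega> n"
  have img: "(\<lambda>\<sigma>. \<sigma> ` P) ` ?A \<subseteq> Pow {1..n}"
    unfolding P_partitions_def by (auto simp: PiE_def Pi_def)
  have "card ?A = (\<Sum>\<sigma>\<in>?A. 1)" by simp
  also have "\<dots> = (\<Sum>S\<in>Pow {1..n}. \<Sum>\<sigma>\<in>{\<sigma>. \<sigma> \<in> ?A \<and> \<sigma> ` P = S}. 1)"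
    by (rule sum.group[symmetric, OF PP_finite[OF fin] _ img]) simp
  also have "\<dots> = (\<Sum>S\<in>Pow {1..n}. esurj P \<omega> (card S))"
    by (intro sum.cong refl) (simp add: count_image[OF fin])
  also have "\<dots> = (\<Sum>k\<in>{..n}. \<Sum>S\<in>{S. S \<in> Pow {1..n} \<and> card S = k}. esurj P \<omega> (card S))"
    by (rule sum.group[symmetric]) (auto intro: card_mono[of "{1..n}", simplified])
  also have "\<dots> = (\<Sum>k\<in>{..n}. esurj P \<omega> k * (n choose k))"
  proof (intro sum.cong refl)
    fix k
    have "(\<Sum>S\<in>{S. S \<in> Pow {1..n} \<and> card S = k}. esurj P \<omega> (card S))
        = (\<Sum>S\<in>{S. S \<in> Pow {1..n} \<and> card S = k}. esurj P \<omega> k)" by simp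
    also have "\<dots> = card {S. S \<subseteq> {1..n} \<and> card S = k} * esurj P \<omega> k" by simp
    also have "\<dots> = (n choose k) * esurj P \<omega> k" using n_subsets[of "{1..n}" k] by simp
    finally show "(\<Sum>S\<in>{S. S \<in> Pow {1..n} \<and> card S = k}. esurj P \<omega> (card S)) = esurj P \<omega> k * (n choose k)"
      by (simp add: mult.commute)
  qed
  also have "\<dots> = (\<Sum>k\<le>n + card P. esurj P \<omega> k * (n choose k))"
    by (rule sum.mono_neutral_left) auto
  also have "\<dots> = (\<Sum>k\<le>card P. esurj P \<omega> k * (n choose k))"
    by (rule sum.mono_neutral_right) (auto simp: esurj_zero[OF fin])
  finally show ?thesis .
qed

definition bpoly :: "nat \<Rightarrow> real poly" where
  "bpoly k = smult (1 / fact k) (\<Prod>i<k. [:- of_nat i, 1:])"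

lemma poly_bpoly: "poly (bpoly k) (real n) = real (n choose k)"
proof -
  have "poly (bpoly k) (real n) = (\<Prod>i<k. real n - real i) / fact k"
    unfolding bpoly_def by (simp add: poly_prod)
  also have "\<dots> = real n gchoose k"
    by (simp add: gbinomial_prod_rev atLeast0LessThan)
  also have "\<dots> = real (n choose k)" by (simp add: binomial_gbinomial)
  finally show ?thesis .
qed

lemma order_poly_exists:
  assumes "finite P"
  shows "\<exists>q. \<forall>n\<ge>1. poly q (real n) = real (card (P_partitions P \<omega> n))"
proof
  let ?q = "\<Sum>k\<le>card P. smult (real (esurj P \<omega> k)) (bpoly k)"
  show "\<forall>n\<ge>1. poly ?q (real n) = real (card (P_partitions P \<omega> n))"
    by (simp add: card_PP_sum[OF assms] poly_sum poly_bpoly)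
qed

lemma poly_eq_infinite:
  fixes p q :: "real poly"
  assumes "infinite A" "\<And>x. x \<in> A \<Longrightarrow> poly p x = poly q x"
  shows "p = q"
proof (rule ccontr)
  assume "p \<noteq> q"
  then have "p - q \<noteq> 0" by simp
  then have "finite {x. poly (p - q) x = 0}" by (rule poly_roots_finite)
  moreover have "A \<subseteq> {x. poly (p - q) x = 0}" using assms(2) by auto
  ultimately show False using assms(1) finite_subset by blast
qed

lemma order_poly_prop:
  assumes "finite P" "n \<ge> 1"
  shows "poly (order_poly P \<omega>) (real n) = real (card (P_partitions P \<omega> n))"
proof -
  have ex1: "\<exists>!q. \<forall>n\<ge>1. poly q (real n) = real (card (P_partitions P \<omega> n))"
  proof (rule ex_ex1I)
    show "\<exists>q. \<forall>n\<ge>1. poly q (real n) = real (card (P_partitions P \<omega> n))"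
      by (rule order_poly_exists[OF assms(1)])
  next
    fix q1 q2 assume h: "\<forall>n\<ge>1. poly q1 (real n) = real (card (P_partitions P \<omega> n))"
      "\<forall>n\<ge>1. poly q2 (real n) = real (card (P_partitions P \<omega> n))"
    show "q1 = q2"
    proof (rule poly_eq_infinite[of "real ` {1..}"])
      show "infinite (real ` {1::nat..})"
      proof
        assume "finite (real ` {1::nat..})"
        then have "finite {1::nat..}" by (rule finite_imageD) (auto simp: inj_on_def)
        moreover have "infinite {1::nat..}" unfolding infinite_nat_iff_unbounded_le proof
          fix m :: nat show "\<exists>n\<ge>m. n \<in> {1..}" by (rule exI[of _ "Suc m"]) auto
        qed
        ultimately show False by simp
      qed
      show "\<And>x. x \<in> real ` {1..} \<Longrightarrow> poly q1 x = poly q2 x" using h by auto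
    qed
  qed
  show ?thesis using theI'[OF ex1] assms(2) unfolding order_poly_def by blast
qed

definition good :: "'a::order set \<Rightarrow> ('a \<Rightarrow> nat) \<Rightarrow> ('a \<Rightarrow> int) \<Rightarrow> bool" where
  "good P \<omega> f \<longleftrightarrow> (\<forall>x y. covers P x y \<longrightarrow> f y \<le> f x \<and> (\<omega> y < \<omega> x \<longrightarrow> f y < f x))"

lemma good_closure:
  assumes fin: "finite P" and g: "good P \<omega> f"
  shows "x \<in> P \<Longrightarrow> y \<in> P \<Longrightarrow> x < y \<Longrightarrow> f y \<le> f x \<and> (\<omega> y < \<omega> x \<longrightarrow> f y < f x)"
proof (induction "card {z\<in>P. x < z \<and> z < y}" arbitrary: x y rule: less_induct)
  case less
  show ?case
  proof (cases "\<exists>z\<in>P. x < z \<and> z < y")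
    case False
    then have "covers P x y" using less.prems unfolding covers_def by auto
    then show ?thesis using g unfolding good_def by blast
  next
    case True
    then obtain z where z: "z \<in> P" "x < z" "z < y" by blast
    have f1: "finite {w\<in>P. x < w \<and> w < y}" using fin by auto
    have "card {w\<in>P. x < w \<and> w < z} < card {w\<in>P. x < w \<and> w < y}"
    proof (rule psubset_card_mono[OF f1])
      have "z \<notin> {w\<in>P. x < w \<and> w < z}" by auto
      moreover have "z \<in> {w\<in>P. x < w \<and> w < y}" using z by auto
      moreover have "{w\<in>P. x < w \<and> w < z} \<subseteq> {w\<in>P. x < w \<and> w < y}" using z by auto
      ultimately show "{w\<in>P. x < w \<and> w < z} \<subset> {w\<in>P. x < w \<and> w < y}" by blast
    qed
    from less.hyps[OF this less.prems(1) z(1) z(2)]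
    have A: "f z \<le> f x \<and> (\<omega> z < \<omega> x \<longrightarrow> f z < f x)" .
    have "card {w\<in>P. z < w \<and> w < y} < card {w\<in>P. x < w \<and> w < y}"
    proof (rule psubset_card_mono[OF f1])
      have "z \<notin> {w\<in>P. z < w \<and> w < y}" by auto
      moreover have "z \<in> {w\<in>P. x < w \<and> w < y}" using z by auto
      moreover have "{w\<in>P. z < w \<and> w < y} \<subseteq> {w\<in>P. x < w \<and> w < y}" using z by auto
      ultimately show "{w\<in>P. z < w \<and> w < y} \<subset> {w\<in>P. x < w \<and> w < y}" by blast
    qed
    from less.hyps[OF this z(1) less.prems(2) z(3)]
    have B: "f y \<le> f z \<and> (\<omega> y < \<omega> z \<longrightarrow> f y < f z)" .
    have "f y \<le> f x" using A B by linarith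
    moreover have "f y < f x" if "\<omega> y < \<omega> x"
    proof (cases "\<omega> z < \<omega> x")
      case True
      then show ?thesis using A B by linarith
    next
      case False
      then have "\<omega> y < \<omega> z" using that by linarith
      then show ?thesis using A B by linarith
    qed
    ultimately show ?thesis by blast
  qed
qed

lemma good_mono:
  assumes "finite P" "good P \<omega> f" "x \<in> P" "y \<in> P" "x \<le> y"
  shows "f y \<le> f x"
  using good_closure[OF assms(1,2,3,4)] assms(5) by (cases "x = y") auto

lemma PP_char:
  assumes fin: "finite P"
  shows "\<sigma> \<in> P_partitions P \<omega> n \<longleftrightarrow> \<sigma> \<in> P \<rightarrow>\<^sub>E {1..n} \<and> good P \<omega> (\<lambda>x. int (\<sigma> x))"
proof
  assume "\<sigma> \<in> P_partitions P \<omega> n"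
  then show "\<sigma> \<in> P \<rightarrow>\<^sub>E {1..n} \<and> good P \<omega> (\<lambda>x. int (\<sigma> x))"
    unfolding P_partitions_def good_def covers_def by auto
next
  assume a: "\<sigma> \<in> P \<rightarrow>\<^sub>E {1..n} \<and> good P \<omega> (\<lambda>x. int (\<sigma> x))"
  have "\<sigma> y \<le> \<sigma> x" if "x \<in> P" "y \<in> P" "x \<le> y" for x y
    using good_mono[OF fin _ that, of \<omega> "\<lambda>x. int (\<sigma> x)"] a by simp
  moreover have "\<sigma> y < \<sigma> x" if "x \<in> P" "y \<in> P" "x < y" "\<omega> y < \<omega> x" for x y
    using good_closure[OF fin _ that(1-3), of \<omega> "\<lambda>x. int (\<sigma> x)"] a that(4) by simp
  ultimately show "\<sigma> \<in> P_partitions P \<omega> n" using a unfolding P_partitions_def by auto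
qed

lemma good_cong:
  assumes "\<And>x. x \<in> P \<Longrightarrow> f x = g x"
  shows "good P \<omega> f \<longleftrightarrow> good P \<omega> g"
  using assms unfolding good_def covers_def by auto

fun csum :: "('a \<Rightarrow> 'a \<Rightarrow> int) \<Rightarrow> 'a list \<Rightarrow> int" where
  "csum f (x # y # zs) = f x y + csum f (y # zs)"
| "csum f _ = 0"

lemma chain_eps_sum_csum: "chain_eps_sum \<omega> xs = csum (eps \<omega>) xs"
proof (induction "eps \<omega>" xs rule: csum.induct)
  case (1 x y zs)
  have "chain_eps_sum \<omega> (x # y # zs) = (\<Sum>i<Suc (length zs). eps \<omega> ((x # y # zs) ! i) ((x # y # zs) ! Suc i))"
    unfolding chain_eps_sum_def by simp
  also have "\<dots> = eps \<omega> x y + (\<Sum>i<length zs. eps \<omega> ((y # zs) ! i) ((y # zs) ! Suc i))"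
    by (subst sum.lessThan_Suc_shift) simp
  also have "\<dots> = eps \<omega> x y + chain_eps_sum \<omega> (y # zs)"
    unfolding chain_eps_sum_def by simp
  finally show ?case using 1 by simp
qed (auto simp: chain_eps_sum_def)

lemma csum_snoc: "xs \<noteq> [] \<Longrightarrow> csum f (xs @ [y]) = csum f xs + f (last xs) y"
  by (induction f xs rule: csum.induct) auto

lemma csum_glue: "xs \<noteq> [] \<Longrightarrow> ys \<noteq> [] \<Longrightarrow> last xs = hd ys \<Longrightarrow>
   csum f (xs @ tl ys) = csum f xs + csum f ys"
proof (induction xs rule: induct_list012)
  case (2 x)
  then obtain ys' where ys: "ys = x # ys'" by (cases ys) auto
  show ?case unfolding ys by simp
next
  case (3 x y zs)
  have h: "csum f ((y # zs) @ tl ys) = csum f (y # zs) + csum f ys"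
    by (rule "3.IH"(2)) (use "3.prems" in auto)
  have "csum f ((x # y # zs) @ tl ys) = f x y + csum f ((y # zs) @ tl ys)" by simp
  also have "\<dots> = f x y + (csum f (y # zs) + csum f ys)" by (simp only: h)
  finally show ?case by simp
qed simp

lemma csum_diff: "csum (\<lambda>a b. f a b - g a b) xs = csum f xs - csum g xs"
  by (induction f xs rule: csum.induct) auto

definition lowerc :: "'a::order set \<Rightarrow> 'a \<Rightarrow> 'a list \<Rightarrow> bool" where
  "lowerc P x xs \<longleftrightarrow> xs \<noteq> [] \<and> successively (covers P) xs \<and> hd xs \<in> P \<and>
     \<not> (\<exists>z\<in>P. z < hd xs) \<and> last xs = x"

definition upperc :: "'a::order set \<Rightarrow> 'a \<Rightarrow> 'a list \<Rightarrow> bool" where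
  "upperc P x xs \<longleftrightarrow> xs \<noteq> [] \<and> successively (covers P) xs \<and> last xs \<in> P \<and>
     \<not> (\<exists>z\<in>P. last xs < z) \<and> hd xs = x"

lemma maximal_chain_alt:
  "maximal_chain P xs \<longleftrightarrow> xs \<noteq> [] \<and> successively (covers P) xs \<and> hd xs \<in> P \<and> last xs \<in> P \<and>
     \<not> (\<exists>z\<in>P. z < hd xs) \<and> \<not> (\<exists>z\<in>P. last xs < z)"
  unfolding maximal_chain_def successively_conv_nth by blast

lemma succ_covers_le:
  assumes "successively (covers P) xs" "xs \<noteq> []"
  shows "hd xs \<le> last xs \<and> (length xs \<ge> 2 \<longrightarrow> hd xs < last xs)"
  using assms
proof (induction xs rule: induct_list012)
  case (3 x y zs)
  then have "covers P x y" "successively (covers P) (y # zs)" by auto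
  then have "x < y" "y \<le> last (y # zs)" using 3(2) unfolding covers_def by auto
  then show ?case by auto
qed auto

lemma succ_covers_set:
  assumes "successively (covers P) xs" "xs \<noteq> []" "hd xs \<in> P"
  shows "set xs \<subseteq> P"
  using assms
proof (induction xs rule: induct_list012)
  case (3 x y zs)
  then have "covers P x y" "successively (covers P) (y # zs)" by auto
  then show ?case using 3 unfolding covers_def by auto
qed auto

lemma lowerc_in: "lowerc P x xs \<Longrightarrow> x \<in> P"
  unfolding lowerc_def using succ_covers_set[of P xs] last_in_set by blast

lemma lowerc_snoc: "lowerc P x xs \<Longrightarrow> covers P x y \<Longrightarrow> lowerc P y (xs @ [y])"
  unfolding lowerc_def by (auto simp: successively_append_iff)

lemma lowerc_exists:
  assumes fin: "finite P"
  shows "x \<in> P \<Longrightarrow> \<exists>xs. lowerc P x xs"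
proof (induction "card {z\<in>P. z < x}" arbitrary: x rule: less_induct)
  case less
  show ?case
  proof (cases "\<exists>z\<in>P. z < x")
    case False
    then have "lowerc P x [x]" using less.prems unfolding lowerc_def by auto
    then show ?thesis by blast
  next
    case True
    have fA: "finite {z\<in>P. z < x}" using fin by auto
    obtain z0 where z0: "z0 \<in> {z\<in>P. z < x}" "\<forall>b\<in>{z\<in>P. z < x}. z0 \<le> b \<longrightarrow> z0 = b"
      using finite_has_maximal[OF fA] True by blast
    have cov: "covers P z0 x" unfolding covers_def
    proof (intro conjI)
      show "\<not> (\<exists>w\<in>P. z0 < w \<and> w < x)"
      proof
        assume "\<exists>w\<in>P. z0 < w \<and> w < x"
        then obtain w where "w \<in> P" "z0 < w" "w < x" by blast
        then show False using z0(2) by (metis (mono_tags, lifting) mem_Collect_eq order_less_imp_le order_less_irrefl)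
      qed
    qed (use z0 less.prems in auto)
    have "card {z\<in>P. z < z0} < card {z\<in>P. z < x}"
    proof (rule psubset_card_mono[OF fA])
      have "z0 \<notin> {z\<in>P. z < z0}" by auto
      moreover have "{z\<in>P. z < z0} \<subseteq> {z\<in>P. z < x}" using z0 by auto
      ultimately show "{z\<in>P. z < z0} \<subset> {z\<in>P. z < x}" using z0(1) by blast
    qed
    then obtain xs where "lowerc P z0 xs" using less.hyps z0(1) by blast
    then show ?thesis using lowerc_snoc[OF _ cov] by blast
  qed
qed

lemma upperc_exists:
  assumes fin: "finite P"
  shows "x \<in> P \<Longrightarrow> \<exists>xs. upperc P x xs"
proof (induction "card {z\<in>P. x < z}" arbitrary: x rule: less_induct)
  case less
  show ?case
  proof (cases "\<exists>z\<in>P. x < z")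
    case False
    then have "upperc P x [x]" using less.prems unfolding upperc_def by auto
    then show ?thesis by blast
  next
    case True
    have fA: "finite {z\<in>P. x < z}" using fin by auto
    obtain z0 where z0: "z0 \<in> {z\<in>P. x < z}" "\<forall>b\<in>{z\<in>P. x < z}. b \<le> z0 \<longrightarrow> z0 = b"
      using finite_has_minimal[OF fA] True by blast
    have cov: "covers P x z0" unfolding covers_def
    proof (intro conjI)
      show "\<not> (\<exists>w\<in>P. x < w \<and> w < z0)"
      proof
        assume "\<exists>w\<in>P. x < w \<and> w < z0"
        then obtain w where "w \<in> P" "x < w" "w < z0" by blast
        then show False using z0(2) by (metis (mono_tags, lifting) mem_Collect_eq order_less_imp_le order_less_irrefl)
      qed
    qed (use z0 less.prems in auto)
    have "card {z\<in>P. z0 < z} < card {z\<in>P. x < z}"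
    proof (rule psubset_card_mono[OF fA])
      have "z0 \<notin> {z\<in>P. z0 < z}" by auto
      moreover have "{z\<in>P. z0 < z} \<subseteq> {z\<in>P. x < z}" using z0 by auto
      ultimately show "{z\<in>P. z0 < z} \<subset> {z\<in>P. x < z}" using z0(1) by blast
    qed
    then obtain xs where xs: "upperc P z0 xs" using less.hyps z0(1) by blast
    have "upperc P x (x # xs)" using xs cov unfolding upperc_def
      by (auto simp: successively_Cons)
    then show ?thesis by blast
  qed
qed

lemma glue_maximal:
  assumes "lowerc P x xs" "upperc P x ys"
  shows "maximal_chain P (xs @ tl ys)"
proof -
  obtain ys' where ys: "ys = x # ys'" using assms(2) unfolding upperc_def by (cases ys) auto
  have xs: "xs \<noteq> []" "last xs = x" "successively (covers P) xs"
    using assms(1) unfolding lowerc_def by auto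
  have s: "successively (covers P) (x # ys')" using assms(2) ys unfolding upperc_def by auto
  have "successively (covers P) (xs @ ys')"
    using s xs successively_Cons[of "covers P" x ys'] successively_append_iff[of "covers P" xs ys']
    by auto
  moreover have "last (xs @ ys') = last ys"
  proof (cases "ys' = []")
    case True
    then show ?thesis using xs ys by simp
  next
    case False
    then show ?thesis using ys by simp
  qed
  moreover have "hd (xs @ ys') = hd xs" using xs by simp
  ultimately show ?thesis using assms ys unfolding maximal_chain_alt lowerc_def upperc_def
    by (simp only: list.sel(3)) blast
qed

lemma graded_rank:
  assumes "eps_graded P \<omega>" "maximal_chain P xs"
  shows "csum (eps \<omega>) xs = eps_rank P \<omega>"
proof -
  obtain r where r: "\<forall>xs. maximal_chain P xs \<longrightarrow> chain_eps_sum \<omega> xs = r"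
    using assms(1) unfolding eps_graded_def by blast
  have "eps_rank P \<omega> = r" unfolding eps_rank_def
    by (rule the_equality) (use r assms(2) in auto)
  then show ?thesis using r assms(2) chain_eps_sum_csum by metis
qed

lemma lower_indep:
  assumes fin: "finite P" and gr: "eps_graded P \<omega>" and "lowerc P x xs" "lowerc P x xs'"
  shows "csum (eps \<omega>) xs = csum (eps \<omega>) xs'"
proof -
  obtain ys where ys: "upperc P x ys" using upperc_exists[OF fin lowerc_in[OF assms(3)]] by blast
  have ne: "xs \<noteq> []" "xs' \<noteq> []" "ys \<noteq> []" "last xs = hd ys" "last xs' = hd ys"
    using assms ys unfolding lowerc_def upperc_def by auto
  have "csum (eps \<omega>) xs + csum (eps \<omega>) ys = eps_rank P \<omega>"
    using graded_rank[OF gr glue_maximal[OF assms(3) ys]] csum_glue[OF ne(1,3,4)] by simp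
  moreover have "csum (eps \<omega>) xs' + csum (eps \<omega>) ys = eps_rank P \<omega>"
    using graded_rank[OF gr glue_maximal[OF assms(4) ys]] csum_glue[OF ne(2,3,5)] by simp
  ultimately show ?thesis by simp
qed

lemma lowerc_minimal:
  assumes "lowerc P m xs" "\<not> (\<exists>z\<in>P. z < m)"
  shows "xs = [m]"
proof (rule ccontr)
  assume "xs \<noteq> [m]"
  moreover have "xs \<noteq> []" "last xs = m" using assms unfolding lowerc_def by auto
  ultimately have "length xs \<ge> 2"
  proof (cases xs)
    case (Cons a t)
    then show ?thesis using \<open>xs \<noteq> [m]\<close> \<open>last xs = m\<close> by (cases t) auto
  qed simp
  then have "hd xs < m" using succ_covers_le[of P xs] assms unfolding lowerc_def by auto
  then show False using assms unfolding lowerc_def by auto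
qed

lemma csum_two:
  "2 * csum (\<lambda>a b. (eps \<mu> a b - eps \<omega> a b) div 2) xs = csum (eps \<mu>) xs - csum (eps \<omega>) xs"
proof (induction "eps \<mu>" xs rule: csum.induct)
  case (1 x y zs)
  then show ?case by (simp add: eps_def algebra_simps)
qed simp_all

lemma good_transfer:
  fixes D :: "'a::order \<Rightarrow> int"
  assumes injw: "inj_on \<omega> P" and injm: "inj_on \<mu> P"
    and Dc: "\<And>x y. covers P x y \<Longrightarrow> D y = D x + (eps \<mu> x y - eps \<omega> x y) div 2"
  shows "good P \<omega> f \<Longrightarrow> good P \<mu> (\<lambda>x. f x + D x + c)"
    and "good P \<mu> g \<Longrightarrow> good P \<omega> (\<lambda>x. g x - D x + c)"
proof -
  have ne: "\<omega> x \<noteq> \<omega> y" "\<mu> x \<noteq> \<mu> y" if "covers P x y" for x y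
    using that injw injm unfolding covers_def inj_on_def by auto
  show "good P \<omega> f \<Longrightarrow> good P \<mu> (\<lambda>x. f x + D x + c)"
    unfolding good_def
  proof (intro allI impI)
    fix x y assume g: "\<forall>x y. covers P x y \<longrightarrow> f y \<le> f x \<and> (\<omega> y < \<omega> x \<longrightarrow> f y < f x)"
      and c: "covers P x y"
    have D: "D y = D x + (eps \<mu> x y - eps \<omega> x y) div 2" using Dc[OF c] .
    have gg: "f y \<le> f x" "\<omega> y < \<omega> x \<longrightarrow> f y < f x" using g c by auto
    show "f y + D y + c \<le> f x + D x + c \<and> (\<mu> y < \<mu> x \<longrightarrow> f y + D y + c < f x + D x + c)"
      using ne[OF c] gg D unfolding eps_def
      by (cases "\<omega> x < \<omega> y"; cases "\<mu> x < \<mu> y") auto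
  qed
  show "good P \<mu> g \<Longrightarrow> good P \<omega> (\<lambda>x. g x - D x + c)"
    unfolding good_def
  proof (intro allI impI)
    fix x y assume g: "\<forall>x y. covers P x y \<longrightarrow> g y \<le> g x \<and> (\<mu> y < \<mu> x \<longrightarrow> g y < g x)"
      and c: "covers P x y"
    have D: "D y = D x + (eps \<mu> x y - eps \<omega> x y) div 2" using Dc[OF c] .
    have gg: "g y \<le> g x" "\<mu> y < \<mu> x \<longrightarrow> g y < g x" using g c by auto
    show "g y - D y + c \<le> g x - D x + c \<and> (\<omega> y < \<omega> x \<longrightarrow> g y - D y + c < g x - D x + c)"
      using ne[OF c] gg D unfolding eps_def
      by (cases "\<omega> x < \<omega> y"; cases "\<mu> x < \<mu> y") auto
  qed
qed

theorem theorem2p2: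
  fixes P :: "'a::order set" and \<omega> \<mu> :: "'a \<Rightarrow> nat"
  assumes "finite P" and "P \<noteq> {}"
    and "is_labeling P \<omega>" and "is_labeling P \<mu>"
    and "eps_graded P \<omega>" and "eps_graded P \<mu>"
  shows "pcompose (order_poly P \<omega>) [:- (of_int (eps_rank P \<omega>) / 2), 1:]
       = pcompose (order_poly P \<mu>) [:- (of_int (eps_rank P \<mu>) / 2), 1:]"
proof -
  note fin = assms(1)
  have injw: "inj_on \<omega> P" and injm: "inj_on \<mu> P"
    using assms(3,4) unfolding is_labeling_def bij_betw_def by auto
  define Lc where "Lc = (\<lambda>x. SOME xs. lowerc P x xs)"
  have Lc: "lowerc P x (Lc x)" if "x \<in> P" for x
    unfolding Lc_def using lowerc_exists[OF fin that] by (rule someI_ex)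
  define \<delta> where "\<delta> = (\<lambda>a b. (eps \<mu> a b - eps \<omega> a b) div 2)"
  define D where "D = (\<lambda>x. csum \<delta> (Lc x))"
  define r\<omega> where "r\<omega> = eps_rank P \<omega>"
  define r\<mu> where "r\<mu> = eps_rank P \<mu>"
  have two: "2 * csum \<delta> xs = csum (eps \<mu>) xs - csum (eps \<omega>) xs" for xs
    unfolding \<delta>_def by (rule csum_two)
  have Dc: "D y = D x + \<delta> x y" if c: "covers P x y" for x y
  proof -
    have xy: "x \<in> P" "y \<in> P" using c unfolding covers_def by auto
    have l1: "lowerc P y (Lc x @ [y])" by (rule lowerc_snoc[OF Lc[OF xy(1)] c])
    have lx: "Lc x \<noteq> []" "last (Lc x) = x" using Lc[OF xy(1)] unfolding lowerc_def by auto
    have "2 * D y = 2 * csum \<delta> (Lc x @ [y])"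
      unfolding D_def two
      using lower_indep[OF fin assms(5) Lc[OF xy(2)] l1] lower_indep[OF fin assms(6) Lc[OF xy(2)] l1]
      by simp
    then show ?thesis unfolding D_def using csum_snoc[OF lx(1)] lx(2) by simp
  qed
  have Dmin: "D m = 0" if "m \<in> P" "\<not> (\<exists>z\<in>P. z < m)" for m
    using lowerc_minimal[OF Lc[OF that(1)] that(2)] unfolding D_def by simp
  have Dmax2: "2 * D M = r\<mu> - r\<omega>" if "M \<in> P" "\<not> (\<exists>z\<in>P. M < z)" for M
  proof -
    have "maximal_chain P (Lc M)" using Lc[OF that(1)] that unfolding maximal_chain_alt lowerc_def
      by auto
    then show ?thesis unfolding D_def two r\<mu>_def r\<omega>_def
      using graded_rank[OF assms(5)] graded_rank[OF assms(6)] by simp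
  qed
  obtain M0 where M0: "M0 \<in> P" "\<forall>b\<in>P. M0 \<le> b \<longrightarrow> M0 = b"
    using finite_has_maximal[OF fin assms(2)] by blast
  have M0': "\<not> (\<exists>z\<in>P. M0 < z)" using M0 by (auto simp: less_le)
  define R where "R = D M0"
  have R2: "2 * R = r\<mu> - r\<omega>" unfolding R_def using Dmax2[OF M0(1) M0'] .
  have Dmax: "D M = R" if "M \<in> P" "\<not> (\<exists>z\<in>P. M < z)" for M
    using Dmax2[OF that] R2 by simp
  have gt1: "good P \<omega> f \<Longrightarrow> good P \<mu> (\<lambda>x. f x + D x + c)" for f c
    using good_transfer(1)[OF injw injm Dc[unfolded \<delta>_def]] by blast
  have gt2: "good P \<mu> g \<Longrightarrow> good P \<omega> (\<lambda>x. g x - D x + c)" for g c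
    using good_transfer(2)[OF injw injm Dc[unfolded \<delta>_def]] by blast
  have maxabove: "\<exists>M\<in>P. x \<le> M \<and> \<not> (\<exists>z\<in>P. M < z)" if "x \<in> P" for x
    using finite_has_maximal2[OF fin that] by (auto simp: less_le)
  have minbelow: "\<exists>m\<in>P. m \<le> x \<and> \<not> (\<exists>z\<in>P. z < m)" if "x \<in> P" for x
    using finite_has_minimal2[OF fin that] by (auto simp: less_le)
  have count: "card (P_partitions P \<omega> n) = card (P_partitions P \<mu> (nat (int n - R)))"
    if n: "int n - R \<ge> 1" for n :: nat
  proof -
    define n' where "n' = nat (int n - R)"
    have n': "int n' = int n - R" using n unfolding n'_def by simp
    define F where "F = (\<lambda>\<sigma>::'a\<Rightarrow>nat. \<lambda>x. if x \<in> P then nat (int (\<sigma> x) + D x - R) else undefined)"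
    define G where "G = (\<lambda>\<sigma>::'a\<Rightarrow>nat. \<lambda>x. if x \<in> P then nat (int (\<sigma> x) - D x + R) else undefined)"
    have Fbnd: "1 \<le> int (\<sigma> x) + D x - R \<and> int (\<sigma> x) + D x - R \<le> int n'"
      if s: "\<sigma> \<in> P_partitions P \<omega> n" and x: "x \<in> P" for \<sigma> x
    proof -
      have sg: "\<sigma> \<in> P \<rightarrow>\<^sub>E {1..n}" "good P \<omega> (\<lambda>x. int (\<sigma> x))" using s PP_char[OF fin] by auto
      have g: "good P \<mu> (\<lambda>x. int (\<sigma> x) + D x + (- R))" using gt1[OF sg(2)] .
      obtain M where M: "M \<in> P" "x \<le> M" "\<not> (\<exists>z\<in>P. M < z)" using maxabove[OF x] by blast
      obtain m where m: "m \<in> P" "m \<le> x" "\<not> (\<exists>z\<in>P. z < m)" using minbelow[OF x] by blast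
      have "int (\<sigma> M) + D M + (- R) \<le> int (\<sigma> x) + D x + (- R)"
        using good_mono[OF fin g x M(1,2)] .
      moreover have "int (\<sigma> x) + D x + (- R) \<le> int (\<sigma> m) + D m + (- R)"
        using good_mono[OF fin g m(1) x m(2)] .
      moreover have "\<sigma> M \<ge> 1" "\<sigma> m \<le> n" using sg(1) M(1) m(1) by auto
      ultimately show ?thesis using Dmax[OF M(1,3)] Dmin[OF m(1,3)] n' by simp
    qed
    have Gbnd: "1 \<le> int (\<sigma> x) - D x + R \<and> int (\<sigma> x) - D x + R \<le> int n"
      if s: "\<sigma> \<in> P_partitions P \<mu> n'" and x: "x \<in> P" for \<sigma> x
    proof -
      have sg: "\<sigma> \<in> P \<rightarrow>\<^sub>E {1..n'}" "good P \<mu> (\<lambda>x. int (\<sigma> x))" using s PP_char[OF fin] by auto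
      have g: "good P \<omega> (\<lambda>x. int (\<sigma> x) - D x + R)" using gt2[OF sg(2)] .
      obtain M where M: "M \<in> P" "x \<le> M" "\<not> (\<exists>z\<in>P. M < z)" using maxabove[OF x] by blast
      obtain m where m: "m \<in> P" "m \<le> x" "\<not> (\<exists>z\<in>P. z < m)" using minbelow[OF x] by blast
      have "int (\<sigma> M) - D M + R \<le> int (\<sigma> x) - D x + R"
        using good_mono[OF fin g x M(1,2)] .
      moreover have "int (\<sigma> x) - D x + R \<le> int (\<sigma> m) - D m + R"
        using good_mono[OF fin g m(1) x m(2)] .
      moreover have "\<sigma> M \<ge> 1" "\<sigma> m \<le> n'" using sg(1) M(1) m(1) by auto
      ultimately show ?thesis using Dmax[OF M(1,3)] Dmin[OF m(1,3)] n' by simp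
    qed
    have "bij_betw F (P_partitions P \<omega> n) (P_partitions P \<mu> n')"
    proof (rule bij_betw_byWitness[where f'=G])
      show "\<forall>a\<in>P_partitions P \<omega> n. G (F a) = a"
      proof
        fix \<sigma> assume s: "\<sigma> \<in> P_partitions P \<omega> n"
        then have ext: "\<sigma> \<in> extensional P" unfolding P_partitions_def by (auto simp: PiE_def)
        show "G (F \<sigma>) = \<sigma>"
        proof
          fix x show "G (F \<sigma>) x = \<sigma> x"
            using ext Fbnd[OF s, of x] unfolding F_def G_def by (auto simp: extensional_def)
        qed
      qed
      show "\<forall>a\<in>P_partitions P \<mu> n'. F (G a) = a"
      proof
        fix \<sigma> assume s: "\<sigma> \<in> P_partitions P \<mu> n'"
        then have ext: "\<sigma> \<in> extensional P" unfolding P_partitions_def by (auto simp: PiE_def)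
        show "F (G \<sigma>) = \<sigma>"
        proof
          fix x show "F (G \<sigma>) x = \<sigma> x"
            using ext Gbnd[OF s, of x] unfolding F_def G_def by (auto simp: extensional_def)
        qed
      qed
      show "F ` P_partitions P \<omega> n \<subseteq> P_partitions P \<mu> n'"
      proof
        fix \<tau> assume "\<tau> \<in> F ` P_partitions P \<omega> n"
        then obtain \<sigma> where s: "\<sigma> \<in> P_partitions P \<omega> n" and t: "\<tau> = F \<sigma>" by blast
        have sg: "good P \<omega> (\<lambda>x. int (\<sigma> x))" using s PP_char[OF fin] by auto
        have g: "good P \<mu> (\<lambda>x. int (\<sigma> x) + D x + (- R))" using gt1[OF sg] .
        have eq: "int (\<tau> x) = int (\<sigma> x) + D x + (- R)" if "x \<in> P" for x
          using Fbnd[OF s that] that unfolding t F_def by simp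
        have "good P \<mu> (\<lambda>x. int (\<tau> x))" using g good_cong[of P "\<lambda>x. int (\<tau> x)", OF eq] by blast
        moreover have "\<tau> \<in> P \<rightarrow>\<^sub>E {1..n'}"
        proof -
          have "\<tau> x \<in> {1..n'}" if x: "x \<in> P" for x
            using Fbnd[OF s x] eq[OF x] by simp
          then show ?thesis unfolding t F_def by (auto simp: PiE_def Pi_def extensional_def)
        qed
        ultimately show "\<tau> \<in> P_partitions P \<mu> n'" using PP_char[OF fin] by blast
      qed
      show "G ` P_partitions P \<mu> n' \<subseteq> P_partitions P \<omega> n"
      proof
        fix \<tau> assume "\<tau> \<in> G ` P_partitions P \<mu> n'"
        then obtain \<sigma> where s: "\<sigma> \<in> P_partitions P \<mu> n'" and t: "\<tau> = G \<sigma>" by blast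
        have sg: "good P \<mu> (\<lambda>x. int (\<sigma> x))" using s PP_char[OF fin] by auto
        have g: "good P \<omega> (\<lambda>x. int (\<sigma> x) - D x + R)" using gt2[OF sg] .
        have eq: "int (\<tau> x) = int (\<sigma> x) - D x + R" if "x \<in> P" for x
          using Gbnd[OF s that] that unfolding t G_def by simp
        have "good P \<omega> (\<lambda>x. int (\<tau> x))" using g good_cong[of P "\<lambda>x. int (\<tau> x)", OF eq] by blast
        moreover have "\<tau> \<in> P \<rightarrow>\<^sub>E {1..n}"
        proof -
          have "\<tau> x \<in> {1..n}" if x: "x \<in> P" for x
            using Gbnd[OF s x] eq[OF x] by simp
          then show ?thesis unfolding t G_def by (auto simp: PiE_def Pi_def extensional_def)
        qed
        ultimately show "\<tau> \<in> P_partitions P \<omega> n" using PP_char[OF fin] by blast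
      qed
    qed
    then show ?thesis unfolding n'_def by (rule bij_betw_same_card)
  qed
  define N0 where "N0 = nat (\<bar>R\<bar> + 1)"
  define A where "A = (\<lambda>n::nat. real n + of_int r\<omega> / 2) ` {N0..}"
  show ?thesis unfolding r\<omega>_def[symmetric] r\<mu>_def[symmetric]
  proof (rule poly_eq_infinite[of A])
    show "infinite A"
    proof
      assume "finite A"
      then have "finite {N0..}" unfolding A_def by (rule finite_imageD) (auto simp: inj_on_def)
      moreover have "infinite {N0..}" unfolding infinite_nat_iff_unbounded_le
      proof
        fix m :: nat show "\<exists>n\<ge>m. n \<in> {N0..}" by (rule exI[of _ "m + N0"]) auto
      qed
      ultimately show False by simp
    qed
  next
    fix t assume "t \<in> A"
    then obtain n where n: "n \<ge> N0" and t: "t = real n + of_int r\<omega> / 2" unfolding A_def by auto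
    have n1: "n \<ge> 1" and nR: "int n - R \<ge> 1" using n unfolding N0_def by auto
    have "poly (pcompose (order_poly P \<omega>) [:- (of_int r\<omega> / 2), 1:]) t = poly (order_poly P \<omega>) (real n)"
      by (simp add: poly_pcompose t)
    also have "\<dots> = real (card (P_partitions P \<omega> n))" by (rule order_poly_prop[OF fin n1])
    also have "\<dots> = real (card (P_partitions P \<mu> (nat (int n - R))))" using count[OF nR] by simp
    also have "\<dots> = poly (order_poly P \<mu>) (real (nat (int n - R)))"
      using order_poly_prop[OF fin, of "nat (int n - R)"] nR by simp
    also have "real (nat (int n - R)) = t - of_int r\<mu> / 2"
    proof -
      have "real (nat (int n - R)) = real n - of_int R" using nR by simp
      also have "of_int R = (of_int r\<mu> - of_int r\<omega>) / (2::real)"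
        using arg_cong[OF R2, of "real_of_int"] by simp
      finally show ?thesis unfolding t by (simp add: field_simps)
    qed
    also have "poly (order_poly P \<mu>) (t - of_int r\<mu> / 2) = poly (pcompose (order_poly P \<mu>) [:- (of_int r\<mu> / 2), 1:]) t"
      by (simp add: poly_pcompose)
    finally show "poly (pcompose (order_poly P \<omega>) [:- (of_int r\<omega> / 2), 1:]) t = poly (pcompose (order_poly P \<mu>) [:- (of_int r\<mu> / 2), 1:]) t" .
  qed
qed

end
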